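(* Let $1<a<b$ be coprime integers. For all $\mathbf{n},\mathbf{n}'\in C_{\mathbb{R}}$ we have $B(\mathbf{n},\mathbf{n}')\ge0$; in particular $Q(\mathbf{n})\ge0$ for $\mathbf{n}\in C_\mathbb{R}$. Moreover, for every $\mathbf{n}\in C_{\mathbb{R}}$, \[ Q(\mathbf{n})\ge \frac{1}{|G|}\,\|\mathbf{n}\|_\infty^2, \] where $\|\mathbf{n}\|_\infty=\max_{i\in G}|n_i|$.
   Context: Fix coprime integers $1<a<b$. Let $g:\mathbb{Z}^2\to\mathbb{Z}$, $g(x,y)=ab-ax-by$, and $G=\{(x,y)\in\mathbb{Z}_{\ge1}^2: g(x,y)>0\}$. Equip $G$ with the partial order $i\preceq j$ iff $g(j)-g(i)\in\{ma+nb: m,n\in\mathbb{Z}_{\ge0}\}$. Let \[ C_{\mathbb{R}}=\{\mathbf{n}=(n_i)_{i\in G}\in\mathbb{R}^G:\ n_i\ge0 \text{ for all } i,\ \ n_j\ge n_i \text{ whenever } i\preceq j\}. \] Define $K(d)=\mathbf{1}_{d\ge0}-\mathbf{1}_{d\ge a}-\mathbf{1}_{d\ge b}+\mathbf{1}_{d\ge a+b}$ for $d\in\mathbb{Z}$, the quadratic form $Q(\mathbf{n})=\sum_{i,j\in G}K(g(j)-g(i))\,n_in_j$ on $\mathbb{R}^G$, and the associated symmetric bilinear form \[ B(\mathbf{n},\mathbf{n}')=\tfrac12\sum_{i,j\in G}K(g(j)-g(i))\,(n_in'_j+n'_in_j), \] so that $B(\mathbf{n},\mathbf{n})=Q(\mathbf{n})$.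 *)

theory Defs
  imports Complex_Main
begin

text \<open>Vectors in R^G are represented as functions (int \<times> int) \<Rightarrow> real; only values on G matter.\<close>

definition gfun :: "int \<Rightarrow> int \<Rightarrow> int \<times> int \<Rightarrow> int" where
  "gfun a b p = a * b - a * fst p - b * snd p"

definition Gset :: "int \<Rightarrow> int \<Rightarrow> (int \<times> int) set" where
  "Gset a b = {p. fst p \<ge> 1 \<and> snd p \<ge> 1 \<and> gfun a b p > 0}"

definition numsemi :: "int \<Rightarrow> int \<Rightarrow> int set" where
  "numsemi a b = {int m * a + int n * b | m n :: nat. True}"

definition prec :: "int \<Rightarrow> int \<Rightarrow> int \<times> int \<Rightarrow> int \<times> int \<Rightarrow> bool" where
  "prec a b i j \<longleftrightarrow> gfun a b j - gfun a b i \<in> numsemi a b"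

definition coneR :: "int \<Rightarrow> int \<Rightarrow> ((int \<times> int) \<Rightarrow> real) set" where
  "coneR a b = {n. (\<forall>i\<in>Gset a b. n i \<ge> 0) \<and>
      (\<forall>i\<in>Gset a b. \<forall>j\<in>Gset a b. prec a b i j \<longrightarrow> n j \<ge> n i)}"

definition Kfun :: "int \<Rightarrow> int \<Rightarrow> int \<Rightarrow> real" where
  "Kfun a b d = (if d \<ge> 0 then 1 else 0) - (if d \<ge> a then 1 else 0)
               - (if d \<ge> b then 1 else 0) + (if d \<ge> a + b then 1 else 0)"

definition Bform :: "int \<Rightarrow> int \<Rightarrow> ((int \<times> int) \<Rightarrow> real) \<Rightarrow> ((int \<times> int) \<Rightarrow> real) \<Rightarrow> real" where
  "Bform a b n n' = (1/2) * (\<Sum>i\<in>Gset a b. \<Sum>j\<in>Gset a b.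
       Kfun a b (gfun a b j - gfun a b i) * (n i * n' j + n' i * n j))"

definition Qform :: "int \<Rightarrow> int \<Rightarrow> ((int \<times> int) \<Rightarrow> real) \<Rightarrow> real" where
  "Qform a b n = (\<Sum>i\<in>Gset a b. \<Sum>j\<in>Gset a b.
       Kfun a b (gfun a b j - gfun a b i) * (n i * n j))"

definition supnorm :: "int \<Rightarrow> int \<Rightarrow> ((int \<times> int) \<Rightarrow> real) \<Rightarrow> real" where
  "supnorm a b n = Max ((\<lambda>i. \<bar>n i\<bar>) ` Gset a b)"

end

theory Submission
  imports Defs
begin
locale AB = fixes a b :: int assumes a1: "1 < a" and ab: "a < b"
begin
abbreviation "g \<equiv> gfun a b"
abbreviation "G \<equiv> Gset a b"
lemma g_simp[simp]: "g (x,y) = a*b - a*x - b*y" by (simp add: gfun_def)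
lemma G_mem: "(x,y) \<in> G \<longleftrightarrow> 1 \<le> x \<and> 1 \<le> y \<and> a*x + b*y < a*b"
  by (auto simp: Gset_def)
lemma G_bounds: assumes "(x,y) \<in> G" shows "1 \<le> x" "x < b" "1 \<le> y" "y < a"
proof -
  have h: "1 \<le> x" "1 \<le> y" "a*x + b*y < a*b" using assms by (auto simp: G_mem)
  show "1 \<le> x" "1 \<le> y" using h by auto
  show "x < b"
  proof (rule ccontr)
    assume "\<not> x < b" hence "a*b \<le> a*x" using a1 by (intro mult_left_mono) auto
    moreover have "0 < b*y" using h a1 ab by auto
    ultimately show False using h by linarith
  qed
  show "y < a"
  proof (rule ccontr)
    assume "\<not> y < a" hence "b*a \<le> b*y" using a1 ab by (intro mult_left_mono) auto
    moreover have "0 < a*x" using h a1 ab by auto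
    ultimately show False using h by (simp add: mult.commute)
  qed
qed

lemma G_sub: "G \<subseteq> {1..b} \<times> {1..a}"
proof
  fix p assume "p \<in> G"
  then obtain x y where p: "p = (x,y)" "(x,y) \<in> G" by (cases p) auto
  from G_bounds[OF p(2)] show "p \<in> {1..b} \<times> {1..a}" using p(1) by auto
qed

lemma finite_G[simp]: "finite G"
  by (rule finite_subset[OF G_sub]) auto

lemma G_down: assumes "(x,y) \<in> G" "1 \<le> x'" "x' \<le> x" "1 \<le> y'" "y' \<le> y"
  shows "(x',y') \<in> G"
proof -
  have "a*x' \<le> a*x" using assms a1 by (intro mult_left_mono) auto
  moreover have "b*y' \<le> b*y" using assms a1 ab by (intro mult_left_mono) auto
  ultimately show ?thesis using assms by (auto simp: G_mem)
qed

lemma one_one_G: "(1,1) \<in> G"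
proof -
  have "1 * 2 \<le> (a-1)*(b-1)" using a1 ab by (intro mult_mono) auto
  hence "a + b < a*b" by (simp add: algebra_simps)
  thus ?thesis by (simp add: G_mem)
qed

definition Pc :: "int \<times> int \<Rightarrow> int \<times> int \<Rightarrow> bool" where
  "Pc p j \<longleftrightarrow> 0 \<le> g j - g p \<and> g j - g p < a"

definition downset :: "(int \<times> int) set \<Rightarrow> bool" where
  "downset D \<longleftrightarrow> D \<subseteq> G \<and> (\<forall>x y x' y'. (x,y) \<in> D \<longrightarrow> 1 \<le> x' \<longrightarrow> x' \<le> x \<longrightarrow> 1 \<le> y' \<longrightarrow> y' \<le> y \<longrightarrow> (x',y') \<in> D)"

definition chgt :: "(int \<times> int) set \<Rightarrow> int \<Rightarrow> int" where
  "chgt D x = Max (insert 0 {y. (x,y) \<in> D})"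

lemma downset_finite: "downset D \<Longrightarrow> finite D"
  unfolding downset_def using finite_subset finite_G by blast

lemma col_finite: assumes "downset D" shows "finite {y. (x,y) \<in> D}"
proof -
  have "{y. (x,y) \<in> D} \<subseteq> snd ` D" by force
  thus ?thesis using downset_finite[OF assms] finite_subset by blast
qed

lemma chgt_nonneg: assumes "downset D" shows "0 \<le> chgt D x"
  unfolding chgt_def using col_finite[OF assms] by simp

lemma chgt_ge: assumes "downset D" "(x,y) \<in> D" shows "y \<le> chgt D x"
  unfolding chgt_def using col_finite[OF assms(1)] assms(2) by (simp add: Max_ge_iff)

lemma mem_iff: assumes "downset D" shows "(x,y) \<in> D \<longleftrightarrow> 1 \<le> y \<and> y \<le> chgt D x"
proof
  assume h: "(x,y) \<in> D"
  hence "(x,y) \<in> G" using assms unfolding downset_def by auto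
  thus "1 \<le> y \<and> y \<le> chgt D x" using G_bounds chgt_ge[OF assms h] by auto
next
  assume h: "1 \<le> y \<and> y \<le> chgt D x"
  let ?S = "insert 0 {y. (x,y) \<in> D}"
  have fin: "finite ?S" using col_finite[OF assms] by simp
  have "Max ?S \<in> ?S" by (rule Max_in[OF fin]) auto
  moreover have "Max ?S \<ge> 1" using h unfolding chgt_def by simp
  ultimately obtain y0 where y0: "(x,y0) \<in> D" "y0 = chgt D x" unfolding chgt_def by auto
  hence "(x,y0) \<in> G" using assms unfolding downset_def by auto
  hence "1 \<le> x" using G_bounds by auto
  thus "(x,y) \<in> D" using assms y0 h unfolding downset_def by blast
qed

lemma chgt_mono: assumes "downset D" "1 \<le> x" "x \<le> x'" shows "chgt D x' \<le> chgt D x"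
proof (cases "chgt D x' = 0")
  case True thus ?thesis using chgt_nonneg[OF assms(1)] by simp
next
  case False
  hence "(x', chgt D x') \<in> D" using mem_iff[OF assms(1)] chgt_nonneg[OF assms(1), of x'] by simp
  moreover hence "1 \<le> chgt D x'" using mem_iff[OF assms(1)] by blast
  ultimately have "(x, chgt D x') \<in> D" using assms(2,3) assms(1)[unfolded downset_def] order_refl by blast
  thus ?thesis using chgt_ge[OF assms(1)] by blast
qed

lemma chgt_empty: assumes "downset D" "\<forall>y. (x,y) \<notin> D" shows "chgt D x = 0"
  unfolding chgt_def using assms(2) by simp

definition KI :: "int \<Rightarrow> int" where
  "KI d = (if 0 \<le> d \<and> d < a then 1 else 0) - (if b \<le> d \<and> d < a + b then 1 else 0)"

definition SI :: "(int \<times> int) set \<Rightarrow> (int \<times> int) set \<Rightarrow> int" where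
  "SI D E = (\<Sum>i\<in>D. \<Sum>j\<in>E. KI (g j - g i))"

lemma KI_Pc: "KI (g j - g (x,y)) = (if Pc (x,y) j then 1 else 0) - (if Pc (x,y-1) j then 1 else 0)"
  by (cases j) (simp add: KI_def Pc_def algebra_simps)

lemma telescope_int: fixes c :: int and h :: "int \<Rightarrow> int" assumes "0 \<le> c" shows "(\<Sum>y\<in>{1..c}. h y - h (y-1)) = h c - (h 0 :: int)"
proof -
  obtain n where n: "c = int n" using assms nonneg_int_cases by blast
  have "(\<Sum>y\<in>{1..int n}. h y - h (y-1)) = h (int n) - h 0"
  proof (induction n)
    case 0 then show ?case by simp
  next
    case (Suc n)
    have "{1..int (Suc n)} = insert (1 + int n) {1..int n}"
      using atLeastAtMostPlus1_int_conv[of 1 "int n"] by simp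
    moreover have "1 + int n \<notin> {1..int n}" by simp
    ultimately show ?case using Suc by (simp add: algebra_simps)
  qed
  thus ?thesis using n by simp
qed

lemma D_Sigma: assumes "downset D" shows "D = Sigma {1..b} (\<lambda>x. {1..chgt D x})"
proof
  show "D \<subseteq> Sigma {1..b} (\<lambda>x. {1..chgt D x})"
  proof
    fix p assume "p \<in> D"
    then obtain x y where p: "p = (x,y)" "(x,y) \<in> D" by (cases p) auto
    hence "(x,y) \<in> G" using assms unfolding downset_def by auto
    thus "p \<in> Sigma {1..b} (\<lambda>x. {1..chgt D x})" using p G_bounds[of x y] mem_iff[OF assms] by auto
  qed
next
  show "Sigma {1..b} (\<lambda>x. {1..chgt D x}) \<subseteq> D" using mem_iff[OF assms] by auto
qed

lemma sum_ind: "finite E \<Longrightarrow> (\<Sum>j\<in>E. if P j then 1 else 0) = int (card {j\<in>E. P j})"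
proof -
  assume f: "finite E"
  have "(\<Sum>j\<in>E. if P j then 1 else 0) = (\<Sum>j\<in>{j\<in>E. P j}. (1::int))"
    using sum.inter_filter[OF f, of "\<lambda>_. (1::int)" P] by simp
  thus ?thesis by simp
qed

lemma SI_cols: assumes "downset D" "downset E"
  shows "SI D E = (\<Sum>x\<in>{1..b}. int (card {j\<in>E. Pc (x, chgt D x) j}) - int (card {j\<in>E. Pc (x,0) j}))"
proof -
  have fE: "finite E" using downset_finite[OF assms(2)] .
  define S where "S = Sigma {1..b} (\<lambda>x. {1..chgt D x})"
  have DS: "D = S" unfolding S_def by (rule D_Sigma[OF assms(1)])
  have "SI D E = (\<Sum>p\<in>S. \<Sum>j\<in>E. KI (g j - g p))"
    unfolding SI_def by (subst (1) DS) (rule refl)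
  also have "\<dots> = (\<Sum>x\<in>{1..b}. \<Sum>y\<in>{1..chgt D x}. \<Sum>j\<in>E. KI (g j - g (x,y)))"
  proof -
    define F where "F = (\<lambda>p. \<Sum>j\<in>E. KI (g j - g p))"
    have "(\<Sum>p\<in>S. F p) = (\<Sum>x\<in>{1..b}. \<Sum>y\<in>{1..chgt D x}. F (x,y))"
      unfolding S_def using sum.Sigma[of "{1..b}" "\<lambda>x. {1..chgt D x}" "\<lambda>x y. F (x,y)"] by simp
    thus ?thesis unfolding F_def by simp
  qed
  also have "\<dots> = (\<Sum>x\<in>{1..b}. \<Sum>j\<in>E. \<Sum>y\<in>{1..chgt D x}. KI (g j - g (x,y)))"
    by (simp add: sum.swap[of _ E])
  also have "\<dots> = (\<Sum>x\<in>{1..b}. \<Sum>j\<in>E. (if Pc (x, chgt D x) j then 1 else 0) - (if Pc (x,0) j then 1 else 0))"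
  proof (rule sum.cong[OF refl], rule sum.cong[OF refl])
    fix x j
    have "(\<Sum>y\<in>{1..chgt D x}. KI (g j - g (x,y))) =
          (\<Sum>y\<in>{1..chgt D x}. (\<lambda>y. if Pc (x,y) j then 1 else 0) y - (\<lambda>y. if Pc (x,y) j then 1 else 0) (y-1))"
      by (rule sum.cong[OF refl]) (simp only: KI_Pc)
    also have "\<dots> = (if Pc (x, chgt D x) j then 1 else 0) - (if Pc (x,0) j then 1 else 0)"
      by (rule telescope_int[OF chgt_nonneg[OF assms(1)]])
    finally show "(\<Sum>y\<in>{1..chgt D x}. KI (g j - g (x,y))) = (if Pc (x, chgt D x) j then 1 else 0) - (if Pc (x,0) j then 1 else 0)" .
  qed
  also have "\<dots> = (\<Sum>x\<in>{1..b}. int (card {j\<in>E. Pc (x, chgt D x) j}) - int (card {j\<in>E. Pc (x,0) j}))"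
    by (simp add: sum_subtractf sum_ind[OF fE])
  finally show ?thesis .
qed

lemma Pc_shift: "Pc (x,c) (u, v) \<longleftrightarrow> Pc (x,0) (u, v - c)"
  by (simp add: Pc_def algebra_simps)

lemma col_split: assumes E: "downset E" and c: "0 \<le> c"
  shows "int (card {j\<in>E. Pc (x,c) j}) - int (card {j\<in>E. Pc (x,0) j})
       = int (card {j\<in>E. Pc (x,c) j \<and> snd j \<le> c}) - int (card {w\<in>E. Pc (x,0) w \<and> (fst w, snd w + c) \<notin> E})"
proof -
  have fE: "finite E" using downset_finite[OF E] .
  define U where "U = {j\<in>E. Pc (x,c) j \<and> c < snd j}"
  define W where "W = {w\<in>E. Pc (x,0) w \<and> (fst w, snd w + c) \<in> E}"
  define f where "f = (\<lambda>j::int\<times>int. (fst j, snd j - c))"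
  have inj: "inj_on f U" unfolding f_def inj_on_def by (auto simp: prod_eq_iff)
  have img: "f ` U = W"
  proof
    show "f ` U \<subseteq> W"
    proof
      fix w assume "w \<in> f ` U"
      then obtain u v where uv: "(u,v) \<in> U" "w = (u, v - c)" unfolding f_def by auto
      hence h: "(u,v) \<in> E" "Pc (x,c) (u,v)" "c < v" unfolding U_def by auto
      have "1 \<le> v - c" "v - c \<le> chgt E u" using h mem_iff[OF E, of u v] c by auto
      hence "(u, v - c) \<in> E" using mem_iff[OF E] by auto
      thus "w \<in> W" unfolding W_def using uv(2) h Pc_shift by auto
    qed
  next
    show "W \<subseteq> f ` U"
    proof
      fix w assume "w \<in> W"
      then obtain u v where uv: "w = (u,v)" "(u,v) \<in> E" "Pc (x,0) (u,v)" "(u, v + c) \<in> E"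
        unfolding W_def by (cases w) auto
      have "1 \<le> v" using uv(2) mem_iff[OF E] by auto
      hence "(u, v + c) \<in> U" unfolding U_def using uv Pc_shift[of x c u "v+c"] c by auto
      moreover have "f (u, v + c) = w" unfolding f_def using uv(1) by simp
      ultimately show "w \<in> f ` U" by force
    qed
  qed
  have cUW: "card U = card W" using card_image[OF inj] img by simp
  have s1: "{j\<in>E. Pc (x,c) j} = {j\<in>E. Pc (x,c) j \<and> snd j \<le> c} \<union> U" unfolding U_def by auto
  have s2: "{j\<in>E. Pc (x,0) j} = {w\<in>E. Pc (x,0) w \<and> (fst w, snd w + c) \<notin> E} \<union> W" unfolding W_def by auto
  have c1: "card {j\<in>E. Pc (x,c) j} = card {j\<in>E. Pc (x,c) j \<and> snd j \<le> c} + card U"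
    unfolding s1 by (rule card_Un_disjoint) (use fE in \<open>auto simp: U_def\<close>)
  have c2: "card {j\<in>E. Pc (x,0) j} = card {w\<in>E. Pc (x,0) w \<and> (fst w, snd w + c) \<notin> E} + card W"
    unfolding s2 by (rule card_Un_disjoint) (use fE in \<open>auto simp: W_def\<close>)
  show ?thesis using c1 c2 cUW by simp
qed

definition AS :: "(int \<times> int) set \<Rightarrow> (int \<times> int) set \<Rightarrow> (int \<times> (int \<times> int)) set" where
  "AS D E = Sigma {1..b} (\<lambda>x. {j\<in>E. Pc (x, chgt D x) j \<and> snd j \<le> chgt D x})"

definition BS :: "(int \<times> int) set \<Rightarrow> (int \<times> int) set \<Rightarrow> (int \<times> (int \<times> int)) set" where
  "BS D E = Sigma {1..b} (\<lambda>x. {w\<in>E. Pc (x,0) w \<and> (fst w, snd w + chgt D x) \<notin> E})"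

lemma finite_AS: "downset E \<Longrightarrow> finite (AS D E)"
  unfolding AS_def using downset_finite by auto

lemma finite_BS: "downset E \<Longrightarrow> finite (BS D E)"
  unfolding BS_def using downset_finite by auto

lemma SI_AB: assumes "downset D" "downset E"
  shows "SI D E = int (card (AS D E)) - int (card (BS D E))"
proof -
  have fE: "finite E" using downset_finite[OF assms(2)] .
  have "SI D E = (\<Sum>x\<in>{1..b}. int (card {j\<in>E. Pc (x, chgt D x) j \<and> snd j \<le> chgt D x})
                   - int (card {w\<in>E. Pc (x,0) w \<and> (fst w, snd w + chgt D x) \<notin> E}))"
    unfolding SI_cols[OF assms] using col_split[OF assms(2) chgt_nonneg[OF assms(1)]] by simp
  also have "\<dots> = int (card (AS D E)) - int (card (BS D E))"
    unfolding AS_def BS_def using fE by (simp add: sum_subtractf)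
  finally show ?thesis .
qed

definition fmap :: "(int \<times> int) set \<Rightarrow> int \<times> (int \<times> int) \<Rightarrow> int \<times> (int \<times> int)" where
  "fmap E p = (fst (snd p), (fst (snd p) + (b * (snd (snd p) - 1)) div a, chgt E (fst (snd p)) - snd (snd p) + 1))"

lemma a_cancel: fixes s :: int assumes "a * s < a" shows "s < 1"
proof -
  have "a * s < a * 1" using assms by simp
  thus ?thesis using a1 mult_less_cancel_left_pos[of a s 1] by simp
qed

lemma fmap_in: assumes D: "downset D" and E: "downset E" and p: "p \<in> BS D E"
  shows "fmap E p \<in> AS E D"
proof -
  obtain x u v where pp: "p = (x,(u,v))" by (cases p) auto
  have hx: "x \<in> {1..b}" and huv: "(u,v) \<in> E" and hP: "Pc (x,0) (u,v)"
    and hn: "(u, v + chgt D x) \<notin> E" using p unfolding pp BS_def by auto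
  define e where "e = chgt E u"
  define q where "q = (b * (v - 1)) div a"
  have v1: "1 \<le> v" "v \<le> e" using mem_iff[OF E] huv unfolding e_def by auto
  have uG: "(u,v) \<in> G" using huv E unfolding downset_def by auto
  have u1: "1 \<le> u" "u < b" using G_bounds[OF uG] by auto
  have cD0: "0 \<le> chgt D x" using chgt_nonneg[OF D] .
  have gt: "e < v + chgt D x" using hn mem_iff[OF E, of u "v + chgt D x"] v1 cD0 unfolding e_def by auto
  have P1: "0 \<le> a*x - a*u - b*v" "a*x - a*u - b*v < a" using hP unfolding Pc_def by (auto simp: algebra_simps)
  have bv: "0 \<le> b * (v - 1)" using v1 ab a1 by auto
  have q0: "0 \<le> q" unfolding q_def using bv a1 by (simp add: pos_imp_zdiv_nonneg_iff)
  have aq: "a * q \<le> b * (v - 1)" unfolding q_def using a1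
    by (metis minus_div_mult_eq_mod mult.commute pos_mod_sign diff_ge_0_iff_ge less_trans zero_less_one)
  have "b * (v - 1) < a * (x - u)" using P1 ab a1 by (simp add: algebra_simps)
  hence "a * q < a * (x - u)" using aq by linarith
  hence qx: "q < x - u" using a1 mult_less_cancel_left_pos[of a q "x - u"] by simp
  have mono: "chgt D x \<le> chgt D (u + q)" using chgt_mono[OF D, of "u+q" x] u1 q0 qx by simp
  have iD: "(u + q, e - v + 1) \<in> D" using mem_iff[OF D] v1 mono gt by auto
  have md: "b * (v - 1) - a * q = (b * (v - 1)) mod a" unfolding q_def
    by (metis minus_div_mult_eq_mod mult.commute)
  have "0 \<le> (b * (v - 1)) mod a" "(b * (v - 1)) mod a < a" using a1 by auto
  hence "Pc (u, e) (u + q, e - v + 1)" using md unfolding Pc_def by (simp add: algebra_simps)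
  moreover have "u \<in> {1..b}" using u1 by auto
  ultimately show ?thesis unfolding AS_def fmap_def pp using iD v1 e_def q_def by auto
qed

lemma fmap_inj: assumes E: "downset E" shows "inj_on (fmap E) (BS D E)"
proof (rule inj_onI)
  fix p p' assume p: "p \<in> BS D E" and p': "p' \<in> BS D E" and eq: "fmap E p = fmap E p'"
  obtain x u v where pp: "p = (x,(u,v))" by (cases p) auto
  obtain x' u' v' where pp': "p' = (x',(u',v'))" by (cases p') auto
  have uu: "u = u'" using eq unfolding fmap_def pp pp' by simp
  hence vv: "v = v'" using eq unfolding fmap_def pp pp' by simp
  have "Pc (x,0) (u,v)" "Pc (x',0) (u,v)" using p p' uu vv unfolding pp pp' BS_def by auto
  hence "a * (x - x') < a" "a * (x' - x) < a" unfolding Pc_def by (auto simp: algebra_simps)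
  hence "x - x' < 1" "x' - x < 1" using a_cancel by blast+
  hence "x = x'" by simp
  thus "p = p'" using pp pp' uu vv by simp
qed

lemma BS_le_AS: assumes "downset D" "downset E" shows "card (BS D E) \<le> card (AS E D)"
  by (rule card_inj_on_le[OF fmap_inj[OF assms(2)]]) (use fmap_in[OF assms] finite_AS[OF assms(1)] in auto)

lemma SI_sym_nonneg: assumes "downset D" "downset E" shows "0 \<le> SI D E + SI E D"
  using SI_AB[OF assms] SI_AB[OF assms(2,1)] BS_le_AS[OF assms] BS_le_AS[OF assms(2,1)] by linarith

lemma BS_lt_AS: assumes D: "downset D" and ne: "D \<noteq> {}" shows "card (BS D D) < card (AS D D)"
proof -
  have fD: "finite D" using downset_finite[OF D] .
  define x0 where "x0 = Max (fst ` D)"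
  have "x0 \<in> fst ` D" unfolding x0_def using fD ne by (intro Max_in) auto
  then obtain y0 where xy0: "(x0, y0) \<in> D" by force
  have xmax: "\<And>x y. (x,y) \<in> D \<Longrightarrow> x \<le> x0" unfolding x0_def using fD by (metis Max_ge finite_imageI fst_conv image_eqI)
  have G0: "(x0,y0) \<in> G" using xy0 D unfolding downset_def by auto
  have x0b: "1 \<le> x0" "x0 < b" "1 \<le> y0" using G_bounds[OF G0] by auto
  have c1: "1 \<le> chgt D x0" using mem_iff[OF D] xy0 by auto
  define z0 where "z0 = (x0, (x0, chgt D x0))"
  have t0: "(x0, chgt D x0) \<in> D" using mem_iff[OF D] c1 by auto
  have z0A: "z0 \<in> AS D D" unfolding z0_def AS_def Pc_def using t0 x0b a1 by auto
  have sub: "fmap D ` BS D D \<subseteq> AS D D - {z0}"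
  proof
    fix z assume "z \<in> fmap D ` BS D D"
    then obtain p where p: "p \<in> BS D D" "z = fmap D p" by auto
    obtain x u v where pp: "p = (x,(u,v))" by (cases p) auto
    have zA: "z \<in> AS D D" using fmap_in[OF D D p(1)] p(2) by simp
    have huv: "(u,v) \<in> D" and hP: "Pc (x,0) (u,v)" and hn: "(u, v + chgt D x) \<notin> D"
      using p(1) unfolding pp BS_def by auto
    have "z \<noteq> z0"
    proof
      assume "z = z0"
      hence u0: "u = x0" and "chgt D u - v + 1 = chgt D x0" using p(2) unfolding z0_def fmap_def pp by auto
      hence v0: "v = 1" by simp
      have "b \<le> a * (x - x0)" using hP u0 v0 unfolding Pc_def by (simp add: algebra_simps)
      hence "0 < a * (x - x0)" using ab a1 by linarith
      hence "x0 < x" using a1 by (simp add: zero_less_mult_iff)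
      hence "\<forall>y. (x,y) \<notin> D" using xmax by force
      hence "chgt D x = 0" by (rule chgt_empty[OF D])
      thus False using hn huv u0 v0 by simp
    qed
    thus "z \<in> AS D D - {z0}" using zA by simp
  qed
  have "card (BS D D) \<le> card (AS D D - {z0})"
    by (rule card_inj_on_le[OF fmap_inj[OF D] sub]) (use finite_AS[OF D] in auto)
  also have "\<dots> < card (AS D D)" by (rule card_Diff1_less[OF finite_AS[OF D] z0A])
  finally show ?thesis .
qed

lemma SI_self_pos: assumes "downset D" "D \<noteq> {}" shows "1 \<le> SI D D"
  using SI_AB[OF assms(1) assms(1)] BS_lt_AS[OF assms] by linarith

definition SR :: "((int \<times> int) \<Rightarrow> real) \<Rightarrow> ((int \<times> int) \<Rightarrow> real) \<Rightarrow> real" where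
  "SR n m = (\<Sum>i\<in>G. \<Sum>j\<in>G. Kfun a b (g j - g i) * (n i * m j))"

definition ind :: "(int \<times> int) set \<Rightarrow> (int \<times> int) \<Rightarrow> real" where
  "ind D i = (if i \<in> D then 1 else 0)"

definition Mon :: "((int \<times> int) \<Rightarrow> real) set" where
  "Mon = {n. (\<forall>i\<in>G. 0 \<le> n i) \<and> (\<forall>x y x' y'. (x,y) \<in> G \<longrightarrow> (x',y') \<in> G \<longrightarrow> x' \<le> x \<longrightarrow> y' \<le> y \<longrightarrow> n (x,y) \<le> n (x',y'))}"

definition supp :: "((int \<times> int) \<Rightarrow> real) \<Rightarrow> (int \<times> int) set" where
  "supp n = {i\<in>G. 0 < n i}"

lemma Kfun_KI: "Kfun a b d = real_of_int (KI d)"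
  using a1 ab unfolding Kfun_def KI_def by auto

lemma sum_restrict: assumes "D \<subseteq> G" shows "(\<Sum>i\<in>G. if i \<in> D then f i else 0) = (\<Sum>i\<in>D. (f i :: real))"
proof -
  have "(\<Sum>i\<in>G. if i \<in> D then f i else 0) = sum f (G \<inter> D)" by (simp add: sum.inter_restrict)
  also have "G \<inter> D = D" using assms by auto
  finally show ?thesis .
qed

lemma SR_ind: assumes "downset D" "downset E" shows "SR (ind D) (ind E) = real_of_int (SI D E)"
proof -
  have DG: "D \<subseteq> G" "E \<subseteq> G" using assms unfolding downset_def by auto
  have "SR (ind D) (ind E) = (\<Sum>i\<in>G. if i \<in> D then (\<Sum>j\<in>G. if j \<in> E then Kfun a b (g j - g i) else 0) else 0)"
    unfolding SR_def ind_def by (intro sum.cong refl) (auto simp del: g_simp intro!: sum.cong)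
  also have "\<dots> = (\<Sum>i\<in>D. \<Sum>j\<in>E. Kfun a b (g j - g i))"
    using sum_restrict[OF DG(1)] sum_restrict[OF DG(2)] by simp
  also have "\<dots> = real_of_int (SI D E)" unfolding SI_def Kfun_KI by simp
  finally show ?thesis .
qed

lemma SR_lin1: assumes "\<forall>i\<in>G. n i = v * p i + q i" shows "SR n m = v * SR p m + SR q m"
proof -
  have "SR n m = (\<Sum>i\<in>G. \<Sum>j\<in>G. v * (Kfun a b (g j - g i) * (p i * m j)) + Kfun a b (g j - g i) * (q i * m j))"
    unfolding SR_def using assms by (intro sum.cong refl) (simp add: algebra_simps)
  thus ?thesis unfolding SR_def by (simp add: sum.distrib sum_distrib_left)
qed

lemma SR_lin2: assumes "\<forall>i\<in>G. m i = v * p i + q i" shows "SR n m = v * SR n p + SR n q"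
proof -
  have "SR n m = (\<Sum>i\<in>G. \<Sum>j\<in>G. v * (Kfun a b (g j - g i) * (n i * p j)) + Kfun a b (g j - g i) * (n i * q j))"
    unfolding SR_def using assms by (intro sum.cong refl) (simp add: algebra_simps)
  thus ?thesis unfolding SR_def by (simp add: sum.distrib sum_distrib_left)
qed

lemma SR_zero1: "\<forall>i\<in>G. n i = 0 \<Longrightarrow> SR n m = 0"
  unfolding SR_def by simp

lemma SR_zero2: "\<forall>i\<in>G. n i = 0 \<Longrightarrow> SR m n = 0"
  unfolding SR_def by simp

lemma ind_Mon: assumes "downset D" shows "ind D \<in> Mon"
  unfolding Mon_def
proof (intro CollectI conjI ballI allI impI)
  fix i show "0 \<le> ind D i" unfolding ind_def by simp
next
  fix x y x' y' assume h: "(x,y) \<in> G" "(x',y') \<in> G" "x' \<le> x" "y' \<le> y"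
  have "1 \<le> x'" "1 \<le> y'" using G_bounds[OF h(2)] by auto
  hence "(x,y) \<in> D \<Longrightarrow> (x',y') \<in> D" using assms h unfolding downset_def by blast
  thus "ind D (x,y) \<le> ind D (x',y')" unfolding ind_def by auto
qed

lemma supp_empty: assumes "n \<in> Mon" "supp n = {}" shows "\<forall>i\<in>G. n i = 0"
  using assms unfolding Mon_def supp_def by force

lemma decomp: assumes n: "n \<in> Mon" and ne: "supp n \<noteq> {}"
  shows "\<exists>v D n''. 0 < v \<and> downset D \<and> D \<noteq> {} \<and> n'' \<in> Mon \<and> (\<forall>i\<in>G. n i = v * ind D i + n'' i)
     \<and> card (supp n'') < card (supp n) \<and> (\<forall>i\<in>G. i \<notin> D \<longrightarrow> n i = 0)"
proof -
  define D where "D = supp n"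
  have fD: "finite D" unfolding D_def supp_def by simp
  have DG: "D \<subseteq> G" unfolding D_def supp_def by auto
  define v where "v = Min (n ` D)"
  have vin: "v \<in> n ` D" unfolding v_def using fD ne D_def by (intro Min_in) auto
  then obtain i0 where i0: "i0 \<in> D" "n i0 = v" by auto
  have vle: "\<And>i. i \<in> D \<Longrightarrow> v \<le> n i" unfolding v_def using fD by auto
  have v0: "0 < v" using i0 unfolding D_def supp_def by auto
  have nonneg: "\<And>i. i \<in> G \<Longrightarrow> 0 \<le> n i" using n unfolding Mon_def by auto
  have monon: "\<And>x y x' y'. (x,y) \<in> G \<Longrightarrow> (x',y') \<in> G \<Longrightarrow> x' \<le> x \<Longrightarrow> y' \<le> y \<Longrightarrow> n (x,y) \<le> n (x',y')"
    using n unfolding Mon_def by auto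
  have dsD: "downset D"
    unfolding downset_def
  proof (intro conjI DG allI impI)
    fix x y x' y' assume h: "(x,y) \<in> D" "1 \<le> x'" "x' \<le> x" "1 \<le> y'" "y' \<le> y"
    have G1: "(x,y) \<in> G" using h DG by auto
    have G2: "(x',y') \<in> G" using G_down[OF G1 h(2-5)] .
    have "0 < n (x,y)" using h unfolding D_def supp_def by auto
    also have "\<dots> \<le> n (x',y')" using monon[OF G1 G2 h(3) h(5)] .
    finally show "(x',y') \<in> D" unfolding D_def supp_def using G2 by auto
  qed
  define n'' where "n'' = (\<lambda>i. if i \<in> D then n i - v else n i)"
  have out0: "\<forall>i\<in>G. i \<notin> D \<longrightarrow> n i = 0" using nonneg unfolding D_def supp_def by force
  have n''nn: "\<forall>i\<in>G. 0 \<le> n'' i" unfolding n''_def using nonneg vle by auto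
  have n''Mon: "n'' \<in> Mon"
    unfolding Mon_def
  proof (intro CollectI conjI n''nn allI impI)
    fix x y x' y' assume h: "(x,y) \<in> G" "(x',y') \<in> G" "x' \<le> x" "y' \<le> y"
    have le: "n (x,y) \<le> n (x',y')" using monon[OF h] .
    show "n'' (x,y) \<le> n'' (x',y')"
    proof (cases "(x,y) \<in> D")
      case True
      hence "(x',y') \<in> D" using dsD h G_bounds[OF h(2)] unfolding downset_def by blast
      thus ?thesis using True le unfolding n''_def by simp
    next
      case False
      hence "n'' (x,y) = 0" using out0 h(1) unfolding n''_def by simp
      thus ?thesis using n''nn h(2) by simp
    qed
  qed
  have ident: "\<forall>i\<in>G. n i = v * ind D i + n'' i" unfolding n''_def ind_def by auto
  have "supp n'' \<subseteq> D - {i0}"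
  proof
    fix i assume "i \<in> supp n''"
    hence i: "i \<in> G" "0 < n'' i" unfolding supp_def by auto
    have "i \<in> D" using i out0 unfolding n''_def by (cases "i \<in> D") auto
    moreover have "i \<noteq> i0" using i i0 unfolding n''_def by auto
    ultimately show "i \<in> D - {i0}" by simp
  qed
  hence "card (supp n'') \<le> card (D - {i0})" using fD by (intro card_mono) auto
  also have "\<dots> < card D" using card_Diff1_less[OF fD i0(1)] .
  finally have "card (supp n'') < card (supp n)" unfolding D_def .
  moreover have "D \<noteq> {}" using i0 by auto
  ultimately show ?thesis using v0 dsD n''Mon ident out0 by blast
qed

lemma P1: assumes E: "downset E" shows "n \<in> Mon \<Longrightarrow> 0 \<le> SR n (ind E) + SR (ind E) n"
proof (induction "card (supp n)" arbitrary: n rule: less_induct)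
  case less
  show ?case
  proof (cases "supp n = {}")
    case True
    hence "\<forall>i\<in>G. n i = 0" using supp_empty less.prems by blast
    thus ?thesis using SR_zero1 SR_zero2 by simp
  next
    case False
    then obtain v D n'' where d: "0 < v" "downset D" "n'' \<in> Mon" "\<forall>i\<in>G. n i = v * ind D i + n'' i"
      "card (supp n'') < card (supp n)" using decomp[OF less.prems] by blast
    have IH: "0 \<le> SR n'' (ind E) + SR (ind E) n''" using less.hyps[OF d(5) d(3)] .
    have e1: "SR n (ind E) = v * SR (ind D) (ind E) + SR n'' (ind E)" using SR_lin1[OF d(4)] .
    have e2: "SR (ind E) n = v * SR (ind E) (ind D) + SR (ind E) n''" using SR_lin2[OF d(4)] .
    have "0 \<le> SR (ind D) (ind E) + SR (ind E) (ind D)"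
      using SR_ind[OF d(2) E] SR_ind[OF E d(2)] SI_sym_nonneg[OF d(2) E] by simp
    hence "0 \<le> v * (SR (ind D) (ind E) + SR (ind E) (ind D))" using d(1) by simp
    thus ?thesis using e1 e2 IH by (simp add: algebra_simps)
  qed
qed

lemma P2: assumes n: "n \<in> Mon" shows "m \<in> Mon \<Longrightarrow> 0 \<le> SR n m + SR m n"
proof (induction "card (supp m)" arbitrary: m rule: less_induct)
  case less
  show ?case
  proof (cases "supp m = {}")
    case True
    hence "\<forall>i\<in>G. m i = 0" using supp_empty less.prems by blast
    thus ?thesis using SR_zero1 SR_zero2 by simp
  next
    case False
    then obtain v E m'' where d: "0 < v" "downset E" "m'' \<in> Mon" "\<forall>i\<in>G. m i = v * ind E i + m'' i"
      "card (supp m'') < card (supp m)" using decomp[OF less.prems] by blast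
    have IH: "0 \<le> SR n m'' + SR m'' n" using less.hyps[OF d(5) d(3)] .
    have e1: "SR n m = v * SR n (ind E) + SR n m''" using SR_lin2[OF d(4)] .
    have e2: "SR m n = v * SR (ind E) n + SR m'' n" using SR_lin1[OF d(4)] .
    have "0 \<le> v * (SR n (ind E) + SR (ind E) n)" using P1[OF d(2) n] d(1) by simp
    thus ?thesis using e1 e2 IH by (simp add: algebra_simps)
  qed
qed

lemma arith_step:
  fixes v x Q k :: real
  assumes v: "0 < v" and x: "0 \<le> x" and Q: "0 \<le> Q" and k: "0 \<le> k" and h: "x^2 \<le> Q * k"
  shows "(v + x)^2 \<le> (v^2 + Q) * (k + 1)"
proof (cases "k = 0")
  case True
  hence "x = 0" using h x by simp
  thus ?thesis using True Q by simp
next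
  case False
  hence kp: "0 < k" using k by simp
  have "k * (v^2 * k + Q - 2*v*x) \<ge> (v*k - x)^2"
  proof -
    have "k * (v^2 * k + Q - 2*v*x) = v^2*k^2 + k*Q - 2*v*x*k" by (simp add: algebra_simps power2_eq_square)
    moreover have "(v*k - x)^2 = v^2*k^2 + x^2 - 2*v*x*k" by (simp add: algebra_simps power2_eq_square)
    ultimately show ?thesis using h by (simp add: mult.commute)
  qed
  hence "0 \<le> k * (v^2 * k + Q - 2*v*x)" by (meson order_trans zero_le_power2)
  hence "0 \<le> v^2 * k + Q - 2*v*x" using kp by (simp add: zero_le_mult_iff)
  moreover have "(v^2 + Q) * (k + 1) - (v + x)^2 = (v^2*k + Q - 2*v*x) + (Q*k - x^2)"
    by (simp add: algebra_simps power2_eq_square)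
  ultimately show ?thesis using h by linarith
qed

lemma P3: "n \<in> Mon \<Longrightarrow> \<forall>i\<in>G. (n i)^2 \<le> SR n n * real (card (supp n))"
proof (induction "card (supp n)" arbitrary: n rule: less_induct)
  case less
  have SRnn: "0 \<le> SR n n" using P2[OF less.prems less.prems] by simp
  show ?case
  proof (cases "supp n = {}")
    case True
    hence "\<forall>i\<in>G. n i = 0" using supp_empty less.prems by blast
    thus ?thesis using SRnn by simp
  next
    case False
    then obtain v D n'' where d: "0 < v" "downset D" "D \<noteq> {}" "n'' \<in> Mon" "\<forall>i\<in>G. n i = v * ind D i + n'' i"
      "card (supp n'') < card (supp n)" "\<forall>i\<in>G. i \<notin> D \<longrightarrow> n i = 0" using decomp[OF less.prems] by blast
    have IH: "\<forall>i\<in>G. (n'' i)^2 \<le> SR n'' n'' * real (card (supp n''))" using less.hyps[OF d(6) d(4)] .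
    have Q0: "0 \<le> SR n'' n''" using P2[OF d(4) d(4)] by simp
    have X0: "0 \<le> SR (ind D) n'' + SR n'' (ind D)" using P2[OF ind_Mon[OF d(2)] d(4)] .
    have S1: "1 \<le> SR (ind D) (ind D)" using SR_ind[OF d(2) d(2)] SI_self_pos[OF d(2) d(3)] by simp
    have "SR n n = v * SR (ind D) n + SR n'' n" using SR_lin1[OF d(5)] .
    also have "SR (ind D) n = v * SR (ind D) (ind D) + SR (ind D) n''" using SR_lin2[OF d(5)] .
    also have "SR n'' n = v * SR n'' (ind D) + SR n'' n''" using SR_lin2[OF d(5)] .
    finally have "SR n n = v^2 * SR (ind D) (ind D) + v * (SR (ind D) n'' + SR n'' (ind D)) + SR n'' n''"
      by (simp add: algebra_simps power2_eq_square)
    moreover have "v^2 \<le> v^2 * SR (ind D) (ind D)" using S1 d(1) by simp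
    moreover have "0 \<le> v * (SR (ind D) n'' + SR n'' (ind D))" using X0 d(1) by simp
    ultimately have big: "v^2 + SR n'' n'' \<le> SR n n" by linarith
    have kk: "real (card (supp n'')) + 1 \<le> real (card (supp n))" using d(6) by simp
    show ?thesis
    proof
      fix i assume iG: "i \<in> G"
      show "(n i)^2 \<le> SR n n * real (card (supp n))"
      proof (cases "i \<in> D")
        case True
        hence ni: "n i = v + n'' i" using d(5) iG unfolding ind_def by simp
        have nn: "0 \<le> n'' i" using d(4) iG unfolding Mon_def by auto
        have "(v + n'' i)^2 \<le> (v^2 + SR n'' n'') * (real (card (supp n'')) + 1)"
          using arith_step[OF d(1) nn Q0 _ IH[rule_format, OF iG]] by simp
        also have "\<dots> \<le> SR n n * real (card (supp n))"
          using big kk Q0 SRnn by (intro mult_mono) auto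
        finally show ?thesis using ni by simp
      next
        case False
        hence "n i = 0" using d(7) iG by simp
        thus ?thesis using SRnn by simp
      qed
    qed
  qed
qed

lemma cone_Mon: "coneR a b \<subseteq> Mon"
proof
  fix n assume n: "n \<in> coneR a b"
  show "n \<in> Mon" unfolding Mon_def
  proof (intro CollectI conjI ballI allI impI)
    fix i assume "i \<in> G" thus "0 \<le> n i" using n unfolding coneR_def by auto
  next
    fix x y x' y' assume h: "(x,y) \<in> G" "(x',y') \<in> G" "x' \<le> x" "y' \<le> y"
    have "g (x',y') - g (x,y) = int (nat (x - x')) * a + int (nat (y - y')) * b"
      using h(3,4) by (simp add: algebra_simps)
    hence "prec a b (x,y) (x',y')" unfolding prec_def numsemi_def by blast
    thus "n (x,y) \<le> n (x',y')" using n h(1,2) unfolding coneR_def by blast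
  qed
qed

lemma Bform_SR: "Bform a b n n' = (SR n n' + SR n' n) / 2"
  unfolding Bform_def SR_def by (simp add: algebra_simps sum.distrib)

lemma Qform_SR: "Qform a b n = SR n n"
  unfolding Qform_def SR_def by simp
end

theorem theorem1p3:
  fixes a b :: int
  assumes "1 < a" and "a < b" and "coprime a b"
  shows "(\<forall>n\<in>coneR a b. \<forall>n'\<in>coneR a b. Bform a b n n' \<ge> 0)
       \<and> (\<forall>n\<in>coneR a b. Qform a b n \<ge> 0)
       \<and> (\<forall>n\<in>coneR a b. Qform a b n \<ge> (supnorm a b n)\<^sup>2 / real (card (Gset a b)))"
proof -
  interpret AB a b using assms by unfold_locales auto
  have part1: "\<forall>n\<in>coneR a b. \<forall>n'\<in>coneR a b. Bform a b n n' \<ge> 0"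
  proof (intro ballI)
    fix n n' assume "n \<in> coneR a b" "n' \<in> coneR a b"
    hence "n \<in> Mon" "n' \<in> Mon" using cone_Mon by auto
    hence "0 \<le> SR n n' + SR n' n" using P2 by blast
    thus "Bform a b n n' \<ge> 0" unfolding Bform_SR by simp
  qed
  have part2: "\<forall>n\<in>coneR a b. Qform a b n \<ge> 0"
  proof
    fix n assume "n \<in> coneR a b"
    hence "n \<in> Mon" using cone_Mon by auto
    thus "Qform a b n \<ge> 0" using P2[of n n] Qform_SR by simp
  qed
  have part3: "\<forall>n\<in>coneR a b. Qform a b n \<ge> (supnorm a b n)\<^sup>2 / real (card (Gset a b))"
  proof
    fix n assume "n \<in> coneR a b"
    hence nM: "n \<in> Mon" using cone_Mon by auto
    have Gne: "G \<noteq> {}" using one_one_G by auto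
    have "supnorm a b n \<in> (\<lambda>i. \<bar>n i\<bar>) ` G" unfolding supnorm_def using Gne by (intro Max_in) auto
    then obtain i0 where i0: "i0 \<in> G" "supnorm a b n = \<bar>n i0\<bar>" by auto
    have SRnn: "0 \<le> SR n n" using P2[OF nM nM] by simp
    have "(supnorm a b n)^2 = (n i0)^2" using i0(2) by simp
    also have "\<dots> \<le> SR n n * real (card (supp n))" using P3[OF nM] i0(1) by blast
    also have "\<dots> \<le> SR n n * real (card G)"
      using SRnn by (intro mult_left_mono) (auto simp: supp_def intro!: card_mono)
    finally have h: "(supnorm a b n)^2 \<le> Qform a b n * real (card G)" using Qform_SR by simp
    have "0 < real (card G)" using Gne by (simp add: card_gt_0_iff)
    thus "Qform a b n \<ge> (supnorm a b n)\<^sup>2 / real (card (Gset a b))" using h by (simp add: divide_le_eq)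
  qed
  show ?thesis using part1 part2 part3 by blast
qed

end
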